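(* For all integers $m\ge1$, $r\ge0$ and $n\ge0$, $$\mathcal D_{m,r}(n,x)=\sum_{k=0}^n\left(\frac12\sum_{l=0}^{n-k}\binom nl W_{m,r}(n-l,k)\,T^{[m]}_l(1)+\frac12W_{m,r}(n,k)\right)\mathcal E_k(x).$$
   Context: The Euler polynomials are defined by $\sum_{n\ge0}\mathcal E_n(x)\frac{t^n}{n!}=\frac{2e^{xt}}{e^t+1}$. For integers $m\ge1$, $n,k,r\ge0$, $W_{m,r}(n,k)$ denotes the $r$-Whitney number of the second kind, defined by $\sum_{n\ge k}W_{m,r}(n,k)\frac{z^n}{n!}=\frac{e^{rz}}{k!}\left(\frac{e^{mz}-1}{m}\right)^k$; the $r$-Dowling polynomial is $\mathcal D_{m,r}(n,u):=\sum_{k=0}^nW_{m,r}(n,k)u^k$; and the $[m]$-Touchard polynomials are $T^{[m]}_n(x):=\sum_{k=0}^n W_{m,0}(n,k)x^k$ (so $T^{[m]}_0=1$). *)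

theory Defs
  imports "HOL-Computational_Algebra.Formal_Power_Series"
begin

definition euler_poly :: "nat \<Rightarrow> real \<Rightarrow> real" where
  "euler_poly n x = fact n * fps_nth (2 * fps_exp x / (fps_exp 1 + 1)) n"

definition whitney2 :: "nat \<Rightarrow> nat \<Rightarrow> nat \<Rightarrow> nat \<Rightarrow> real" where
  "whitney2 m r n k = fact n *
     fps_nth (fps_exp (real r) * fps_const (1 / fact k) *
              (fps_const (1 / real m) * (fps_exp (real m) - 1)) ^ k) n"

definition dowling :: "nat \<Rightarrow> nat \<Rightarrow> nat \<Rightarrow> real \<Rightarrow> real" where
  "dowling m r n u = (\<Sum>k=0..n. whitney2 m r n k * u ^ k)"

definition touchard :: "nat \<Rightarrow> nat \<Rightarrow> real \<Rightarrow> real" where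
  "touchard m n x = (\<Sum>k=0..n. whitney2 m 0 n k * x ^ k)"

end

theory Submission imports Defs begin
unbundle fps_syntax

definition UU :: "nat \<Rightarrow> real fps" where
  "UU m = fps_const (1 / real m) * (fps_exp (real m) - 1)"

lemma UU0: "UU m $ 0 = 0" by (simp add: UU_def)

lemma whitney2_UU: "whitney2 m r n k = fact n * (1 / fact k) * (fps_exp (real r) * UU m ^ k) $ n"
proof -
  have "fps_exp (real r) * fps_const (1 / fact k) * UU m ^ k = fps_const (1/fact k) * (fps_exp (real r) * UU m ^ k)"
    by (simp add: algebra_simps)
  then show ?thesis unfolding whitney2_def UU_def[symmetric] by (simp only: fps_mult_left_const_nth mult.assoc)
qed

lemma powU_nth: "j < k \<Longrightarrow> (c * UU m ^ k) $ j = 0"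
  by (simp add: fps_mult_nth startsby_zero_power_prefix[OF UU0])

lemma whitney2_zero: "n < k \<Longrightarrow> whitney2 m r n k = 0"
  by (simp add: whitney2_UU powU_nth)

lemma compose_L:
  assumes b0: "b $ 0 = (0::real)"
  shows "(c * (a oo b)) $ n = (\<Sum>j=0..n. a $ j * (c * b ^ j) $ n)"
proof -
  have "(c * (a oo b)) $ n = (\<Sum>i=0..n. c $ i * (\<Sum>j=0..n-i. a $ j * (b^j) $ (n-i)))"
    by (simp add: fps_mult_nth fps_compose_nth)
  also have "\<dots> = (\<Sum>i=0..n. c $ i * (\<Sum>j=0..n. a $ j * (b^j) $ (n-i)))"
  proof (rule sum.cong[OF refl])
    fix i assume i: "i \<in> {0..n}"
    have "(\<Sum>j=0..n-i. a $ j * (b^j) $ (n-i)) = (\<Sum>j=0..n. a $ j * (b^j) $ (n-i))"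
      by (rule sum.mono_neutral_left) (auto simp: startsby_zero_power_prefix[OF b0])
    then show "c $ i * (\<Sum>j=0..n-i. a $ j * (b^j) $ (n-i)) = c $ i * (\<Sum>j=0..n. a $ j * (b^j) $ (n-i))"
      by simp
  qed
  also have "\<dots> = (\<Sum>j=0..n. a $ j * (\<Sum>i=0..n. c $ i * (b^j) $ (n-i)))"
    unfolding sum_distrib_left mult.assoc[symmetric]
    by (subst sum.swap) (simp only: mult_ac)
  also have "\<dots> = (\<Sum>j=0..n. a $ j * (c * b ^ j) $ n)"
    by (simp add: fps_mult_nth)
  finally show ?thesis .
qed

lemma touchard_E: "touchard m l 1 = fact l * (fps_exp 1 oo UU m) $ l"
  by (simp add: touchard_def whitney2_UU fps_compose_nth sum_distrib_left algebra_simps)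

lemma euler_rec: "2 * x ^ j = (\<Sum>k=0..j. real (j choose k) * euler_poly k x) + euler_poly j x"
proof -
  define F :: "real fps" where "F = 2 * fps_exp x / (fps_exp 1 + 1)"
  have d0: "(fps_exp 1 + 1 :: real fps) $ 0 \<noteq> 0" by simp
  have FE: "F * (fps_exp 1 + 1) = 2 * fps_exp x"
    unfolding F_def fps_divide_unit[OF d0] using inverse_mult_eq_1[OF d0]
    by (simp add: mult.assoc)
  have "(F * (fps_exp 1 + 1)) $ j = (F * fps_exp 1) $ j + F $ j" by (simp add: distrib_left)
  also have "(F * fps_exp 1) $ j = (\<Sum>k=0..j. F $ k / fact (j - k))" by (simp add: fps_mult_nth)
  finally have "2 * x ^ j / fact j = (\<Sum>k=0..j. F $ k / fact (j - k)) + F $ j"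
    using FE by (simp add: numeral_fps_const)
  then have "2 * x ^ j = fact j * ((\<Sum>k=0..j. F $ k / fact (j - k)) + F $ j)"
    by (simp add: field_simps)
  also have "\<dots> = (\<Sum>k=0..j. real (j choose k) * euler_poly k x) + euler_poly j x"
    by (simp add: distrib_left sum_distrib_left euler_poly_def F_def binomial_fact field_simps)
  finally show ?thesis .
qed

lemma lemA:
  assumes kn: "k \<le> n"
  shows "(\<Sum>l=0..n-k. real (n choose l) * whitney2 m r (n-l) k * touchard m l 1)
       = (\<Sum>j=0..n. whitney2 m r n j * real (j choose k))"
proof -
  define A where "A = fps_exp (real r) * UU m ^ k"
  define E where "E = fps_exp 1 oo UU m"
  define H :: "real fps" where "H = fps_const (1/fact k) * fps_X^k * fps_exp 1"
  have "(\<Sum>l=0..n-k. real (n choose l) * whitney2 m r (n-l) k * touchard m l 1)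
      = (\<Sum>l=0..n-k. fact n / fact k * (A $ (n-l) * E $ l))"
  proof (rule sum.cong[OF refl])
    fix l assume "l \<in> {0..n-k}"
    then have "l \<le> n" by auto
    then show "real (n choose l) * whitney2 m r (n-l) k * touchard m l 1 = fact n / fact k * (A $ (n-l) * E $ l)"
      by (simp add: whitney2_UU touchard_E binomial_fact A_def E_def field_simps)
  qed
  also have "\<dots> = (\<Sum>l=0..n. fact n / fact k * (A $ (n-l) * E $ l))"
    by (rule sum.mono_neutral_left) (auto simp: A_def powU_nth)
  also have "\<dots> = fact n / fact k * (E * A) $ n"
    unfolding fps_mult_nth sum_distrib_left by (rule sum.cong[OF refl]) (simp add: mult_ac)
  finally have L: "(\<Sum>l=0..n-k. real (n choose l) * whitney2 m r (n-l) k * touchard m l 1) = fact n / fact k * (E * A) $ n" .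
  have HU: "H oo UU m = fps_const (1/fact k) * UU m ^ k * E"
    unfolding H_def E_def
    by (simp add: fps_compose_mult_distrib[OF UU0] fps_compose_power[OF UU0, symmetric] fps_X_fps_compose_startby0[OF UU0])
  have "(\<Sum>j=0..n. whitney2 m r n j * real (j choose k)) = (\<Sum>j=0..n. fact n * (H $ j * (fps_exp (real r) * UU m ^ j) $ n))"
  proof (rule sum.cong[OF refl])
    fix j assume "j \<in> {0..n}"
    show "whitney2 m r n j * real (j choose k) = fact n * (H $ j * (fps_exp (real r) * UU m ^ j) $ n)"
    proof (cases "j < k")
      case True then show ?thesis by (simp add: H_def whitney2_UU fps_X_power_mult_nth mult.assoc)
    next
      case False then show ?thesis
        by (simp add: H_def whitney2_UU fps_X_power_mult_nth mult.assoc binomial_fact)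
    qed
  qed
  also have "\<dots> = fact n * (fps_exp (real r) * (H oo UU m)) $ n"
    by (simp add: compose_L[OF UU0] sum_distrib_left)
  also have "\<dots> = fact n / fact k * (E * A) $ n"
  proof -
    have "fps_exp (real r) * (H oo UU m) = fps_const (1/fact k) * (E * A)"
      by (simp add: HU A_def mult_ac)
    then show ?thesis by simp
  qed
  finally show ?thesis using L by simp
qed

theorem mainTheorem17:
  fixes m r n :: nat and x :: real
  assumes "m \<ge> 1"
  shows "dowling m r n x =
    (\<Sum>k=0..n. ((1/2) * (\<Sum>l=0..n-k. real (n choose l) * whitney2 m r (n-l) k * touchard m l 1)
                 + (1/2) * whitney2 m r n k) * euler_poly k x)"
proof -
  have "(\<Sum>k=0..n. ((1/2) * (\<Sum>l=0..n-k. real (n choose l) * whitney2 m r (n-l) k * touchard m l 1)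
                 + (1/2) * whitney2 m r n k) * euler_poly k x)
      = (\<Sum>k=0..n. ((1/2) * (\<Sum>j=0..n. whitney2 m r n j * real (j choose k))
                 + (1/2) * whitney2 m r n k) * euler_poly k x)"
    by (rule sum.cong[OF refl]) (simp add: lemA)
  also have "\<dots> = (1/2) * (\<Sum>j=0..n. whitney2 m r n j * (\<Sum>k=0..n. real (j choose k) * euler_poly k x))
       + (1/2) * (\<Sum>k=0..n. whitney2 m r n k * euler_poly k x)"
  proof -
    have "(\<Sum>k=0..n. ((1/2) * (\<Sum>j=0..n. whitney2 m r n j * real (j choose k))
                 + (1/2) * whitney2 m r n k) * euler_poly k x)
      = (1/2) * (\<Sum>k=0..n. \<Sum>j=0..n. whitney2 m r n j * (real (j choose k) * euler_poly k x))
       + (1/2) * (\<Sum>k=0..n. whitney2 m r n k * euler_poly k x)"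
      unfolding distrib_right sum.distrib sum_distrib_left sum_distrib_right by (simp add: mult_ac)
    also have "(\<Sum>k=0..n. \<Sum>j=0..n. whitney2 m r n j * (real (j choose k) * euler_poly k x))
       = (\<Sum>j=0..n. whitney2 m r n j * (\<Sum>k=0..n. real (j choose k) * euler_poly k x))"
      by (subst sum.swap) (simp add: sum_distrib_left)
    finally show ?thesis .
  qed
  also have "\<dots> = (\<Sum>j=0..n. whitney2 m r n j * ((1/2) * ((\<Sum>k=0..j. real (j choose k) * euler_poly k x) + euler_poly j x)))"
  proof -
    have "\<And>j. j \<in> {0..n} \<Longrightarrow> (\<Sum>k=0..n. real (j choose k) * euler_poly k x) = (\<Sum>k=0..j. real (j choose k) * euler_poly k x)"
      by (rule sum.mono_neutral_right) auto
    then have "(\<Sum>j=0..n. whitney2 m r n j * (\<Sum>k=0..n. real (j choose k) * euler_poly k x))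
      = (\<Sum>j=0..n. whitney2 m r n j * (\<Sum>k=0..j. real (j choose k) * euler_poly k x))"
      by (intro sum.cong refl) simp
    then show ?thesis
      by (simp add: sum_distrib_left distrib_left sum.distrib mult_ac)
  qed
  also have "\<dots> = dowling m r n x"
    by (simp add: dowling_def euler_rec[symmetric])
  finally show ?thesis by simp
qed

end
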